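(* Let $\{(F_j,d_j)\}_{j\ge 1}$ be a countable collection of metric spaces with labelled presentations $\mathcal F^j$ (common alphabet $\{1,\dots,m\}$, $m\ge2$) as in the context. If $\mathcal F=\bigcup_{j\ge1}\mathcal F^j$ is a strong modular chaotic structure for $F=\bigcup_{j\ge1}F_j$, then the map $\varPhi$ is modular chaotic in the Li-Yorke sense.
   Context: Setting. Let $(F_j,d_j)$, $j=1,2,\ldots$, be metric spaces and $m\ge2$ a natural number. For each $j$ there is a presentation $\mathcal F^j=\{\mathcal F^j_{i_1i_2\ldots}: i_k\in\{1,\dots,m\}\}$: every infinite sequence over $\{1,\dots,m\}$ labels an element of $F_j$ and every element of $F_j$ has at least one label (not necessarily unique). Put $\delta_j(\mathcal F^j_{i_1i_2\ldots},\mathcal F^j_{j_1j_2\ldots})=d_j(f_1,f_2)$ when the labels correspond to $f_1,f_2\in F_j$; write $\delta$ for $\delta_j$ on $\mathcal F^j$. For fixed $i_1,\dots,i_n$, $\mathcal F^j_{i_1\ldots i_n}=\bigcup_{j_k}\mathcal F^j_{i_1\ldots i_nj_1j_2\ldots}$; $\mathrm{diam}(A)=\sup\{\delta_j(x,y):x,y\in A\}$, $\delta_j(A,B)=\inf\{\delta_j(x,y):x\in A,y\in B\}$. $\mathcal F$ is a strong modular chaotic structure for $F$ if $\sup_j\max_{i_1\ldots i_n}\mathrm{diam}(\mathcal F^j_{i_1\ldots i_n})\to0$ as $n\to\infty$ (strong diameter condition), and for every $j$ there are $\varepsilon_0^j>0$ and a natural $n=n(j)$ such that for any $i_1\ldots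 i_n$ there exist $j_1\ldots j_n$ with $\delta_j(\mathcal F^j_{i_1\ldots i_n},\mathcal F^j_{j_1\ldots j_n})\ge\varepsilon_0^j$, with $\inf_j\varepsilon_0^j>0$. The modular similarity map: $\varphi(\mathcal F^j_{i_1i_2i_3\ldots})=\mathcal F^{j+1}_{i_2i_3\ldots}$. The multivalued map $\varPhi:F\to F$ sends $f\in F_j$ to the points of $F_{j+1}$ labelled by $\varphi(\mathcal F^j_{i_1i_2\ldots})$ for all labels of $f$; $\varPhi$ is modular chaotic in the Li-Yorke sense if $\varphi$ is. A point $\mathcal F^j_{i_1i_2\ldots}$ is (modular-)periodic with period $p$ if its lower index is an endless repetition of a block of $p$ terms. Modular Li-Yorke chaos of $\varphi$: in addition to the modular-periodic points, for each $j=1,2,\ldots$ there is an uncountable scrambled set of non-periodic points in $\mathcal F^j$ such that for each couple $x,y$ in the set with $\delta(x,y)\ne0$: $\limsup_{k\to\infty}\delta(\varphi^k(x),\varphi^k(y))>0$ and $\liminf_{k\to\infty}\delta(\varphi^k(x),\varphi^k(y))=0$; and for each point $x$ of the set and each periodic point $y$ of $\mathcal F^j$: $\limsup_{k\to\infty}\delta(\varphi^k(x),\varphi^k(y))>0$. *)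

theory Defs
  imports "HOL-Analysis.Analysis"
begin

definition seqs :: "nat \<Rightarrow> (nat \<Rightarrow> nat) set" where
  "seqs m = {s. \<forall>k. s k \<in> {1..m}}"

definition metric_on :: "'a set \<Rightarrow> ('a \<Rightarrow> 'a \<Rightarrow> real) \<Rightarrow> bool" where
  "metric_on A d \<longleftrightarrow> (\<forall>x\<in>A. \<forall>y\<in>A. 0 \<le> d x y \<and> (d x y = 0 \<longleftrightarrow> x = y) \<and> d x y = d y x
       \<and> (\<forall>z\<in>A. d x z \<le> d x y + d y z))"

definition presentation :: "nat \<Rightarrow> 'a set \<Rightarrow> ((nat \<Rightarrow> nat) \<Rightarrow> 'a) \<Rightarrow> bool" where
  "presentation m A lab \<longleftrightarrow> lab ` seqs m = A"

definition delta :: "(nat \<Rightarrow> (nat \<Rightarrow> nat) \<Rightarrow> 'a) \<Rightarrow> (nat \<Rightarrow> 'a \<Rightarrow> 'a \<Rightarrow> real)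
     \<Rightarrow> nat \<times> (nat \<Rightarrow> nat) \<Rightarrow> nat \<times> (nat \<Rightarrow> nat) \<Rightarrow> real" where
  "delta lab d x y = d (fst x) (lab (fst x) (snd x)) (lab (fst y) (snd y))"

definition modsim :: "nat \<times> (nat \<Rightarrow> nat) \<Rightarrow> nat \<times> (nat \<Rightarrow> nat)" where
  "modsim x = (Suc (fst x), (\<lambda>i. snd x (Suc i)))"

definition periodic_label :: "nat \<Rightarrow> (nat \<Rightarrow> nat) \<Rightarrow> bool" where
  "periodic_label p s \<longleftrightarrow> p \<ge> 1 \<and> (\<forall>k. s (k + p) = s k)"

definition strong_modular_chaotic_structure ::
  "nat \<Rightarrow> (nat \<Rightarrow> 'a \<Rightarrow> 'a \<Rightarrow> real) \<Rightarrow> (nat \<Rightarrow> (nat \<Rightarrow> nat) \<Rightarrow> 'a) \<Rightarrow> bool" where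
  "strong_modular_chaotic_structure m d lab \<longleftrightarrow>
     \<comment> \<open>strong diameter condition: sup_j max_{i1..in} diam(F^j_{i1..in}) \<rightarrow> 0\<close>
     (\<forall>\<epsilon>>0. \<exists>N. \<forall>n\<ge>N. \<forall>j\<ge>1. \<forall>s\<in>seqs m. \<forall>t\<in>seqs m.
         (\<forall>k<n. s k = t k) \<longrightarrow> delta lab d (j, s) (j, t) \<le> \<epsilon>)
   \<and> \<comment> \<open>separation condition with inf_j eps0_j > 0\<close>
     (\<exists>eps0 :: nat \<Rightarrow> real. \<exists>nn :: nat \<Rightarrow> nat.
        (\<forall>j\<ge>1. eps0 j > 0) \<and> (INF j\<in>{1..}. eps0 j) > 0 \<and>
        (\<forall>j\<ge>1. \<forall>u\<in>seqs m. \<exists>v\<in>seqs m. \<forall>s\<in>seqs m. \<forall>t\<in>seqs m.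
            (\<forall>k<nn j. s k = u k) \<longrightarrow> (\<forall>k<nn j. t k = v k) \<longrightarrow>
            delta lab d (j, s) (j, t) \<ge> eps0 j))"

definition modular_li_yorke_chaotic ::
  "nat \<Rightarrow> (nat \<Rightarrow> 'a \<Rightarrow> 'a \<Rightarrow> real) \<Rightarrow> (nat \<Rightarrow> (nat \<Rightarrow> nat) \<Rightarrow> 'a) \<Rightarrow> bool" where
  "modular_li_yorke_chaotic m d lab \<longleftrightarrow>
     (\<forall>j::nat\<ge>1. \<forall>p::nat\<ge>1. \<exists>s\<in>seqs m. periodic_label p s) \<and>
     (\<forall>j\<ge>1. \<exists>S \<subseteq> seqs m. \<not> countable S \<and>
        (\<forall>s\<in>S. \<forall>p. \<not> periodic_label p s) \<and>
        (\<forall>s\<in>S. \<forall>t\<in>S. delta lab d (j, s) (j, t) \<noteq> 0 \<longrightarrow>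
            limsup (\<lambda>k. ereal (delta lab d ((modsim ^^ k) (j, s)) ((modsim ^^ k) (j, t)))) > 0 \<and>
            liminf (\<lambda>k. ereal (delta lab d ((modsim ^^ k) (j, s)) ((modsim ^^ k) (j, t)))) = 0) \<and>
        (\<forall>s\<in>S. \<forall>t\<in>seqs m. (\<exists>p. periodic_label p t) \<longrightarrow>
            limsup (\<lambda>k. ereal (delta lab d ((modsim ^^ k) (j, s)) ((modsim ^^ k) (j, t)))) > 0))"

end

theory Submission
  imports Defs
begin

lemma modsim_pow: "(modsim ^^ k) (j, s) = (j + k, \<lambda>i. s (i + k))"
  by (induction k) (auto simp: modsim_def add.assoc)

lemma limsup_ge_freq:
  fixes f :: "nat \<Rightarrow> ereal"
  assumes "\<And>K. \<exists>k\<ge>K. c \<le> f k"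
  shows "c \<le> limsup f"
  unfolding limsup_INF_SUP
proof (rule INF_greatest)
  fix n show "c \<le> (SUP m\<in>{n..}. f m)"
    using assms[of n] by (meson SUP_upper2 atLeast_iff)
qed

lemma liminf_le_freq:
  fixes f :: "nat \<Rightarrow> ereal"
  assumes "\<And>K. \<exists>k\<ge>K. f k \<le> c"
  shows "liminf f \<le> c"
  unfolding liminf_SUP_INF
proof (rule SUP_least)
  fix n show "(INF m\<in>{n..}. f m) \<le> c"
    using assms[of n] by (meson INF_lower2 atLeast_iff)
qed

lemma uncountable_nat_bool: "uncountable (UNIV :: (nat \<Rightarrow> bool) set)"
  unfolding uncountable_def
proof safe
  fix f :: "nat \<Rightarrow> nat \<Rightarrow> bool" assume "range f = UNIV"
  then have "(\<lambda>i. \<not> f i i) \<in> range f" by simp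
  then obtain n where eq: "(\<lambda>i. \<not> f i i) = f n" by (elim rangeE)
  show False using fun_cong[OF eq, of n] by simp
qed

lemma periodic_mult:
  assumes "periodic_label p t" shows "t (i + p * c) = t i"
proof (induction c)
  case 0 then show ?case by simp
next
  case (Suc c)
  have "t (i + p * Suc c) = t ((i + p*c) + p)" by (simp add: algebra_simps)
  also have "\<dots> = t (i + p*c)" using assms by (simp add: periodic_label_def)
  finally show ?case using Suc by simp
qed

lemma sp_facts: "strict_mono (\<lambda>n::nat. fact (n+2) :: nat)"
  "fact (n+2) + n + 1 \<le> (fact (Suc n + 2) :: nat)"
  "n \<le> (fact (n+2) :: nat)"
  "1 \<le> p \<Longrightarrow> p \<le> n \<Longrightarrow> p dvd (fact (n+2) :: nat)"
proof -
  show "strict_mono (\<lambda>n::nat. fact (n+2) :: nat)"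
    by (rule strict_monoI_Suc) (simp add: fact_less_mono)
  have f1: "(1::nat) \<le> fact (n+2)" by (simp add: Suc_leI)
  have s: "Suc n + 2 = Suc (n+2)" by simp
  have e: "(fact (Suc n + 2) :: nat) = fact (n+2) + (n+2) * fact (n+2)"
    unfolding s fact_Suc of_nat_id by (rule mult_Suc)
  have "(n+2) * 1 \<le> (n+2) * (fact (n+2) :: nat)" using f1 by (rule mult_le_mono2)
  then have "n + 2 \<le> (n+2) * (fact (n+2) :: nat)" by (simp only: mult_1_right)
  then show "fact (n+2) + n + 1 \<le> (fact (Suc n + 2) :: nat)" unfolding e by linarith
  show "n \<le> (fact (n+2) :: nat)" using fact_ge_self[of "n+2"] by simp
  show "1 \<le> p \<Longrightarrow> p \<le> n \<Longrightarrow> p dvd (fact (n+2) :: nat)" by (simp add: dvd_fact)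
qed

lemma metric_onD:
  assumes "metric_on A d" "x \<in> A" "y \<in> A"
  shows "0 \<le> d x y" "d x y = d y x" "d x x = 0"
proof -
  have H: "\<And>a b. a \<in> A \<Longrightarrow> b \<in> A \<Longrightarrow> 0 \<le> d a b \<and> (d a b = 0 \<longleftrightarrow> a = b) \<and> d a b = d b a"
    using assms(1) unfolding metric_on_def by blast
  show "0 \<le> d x y" using H[OF assms(2,3)] by (elim conjE)
  show "d x y = d y x" using H[OF assms(2,3)] by (elim conjE)
  show "d x x = 0" using H[OF assms(2,2)] by simp
qed

lemma metric_on_tri:
  assumes "metric_on A d" "x \<in> A" "y \<in> A" "z \<in> A"
  shows "d x z \<le> d x y + d y z"
proof -
  have "\<forall>z\<in>A. d x z \<le> d x y + d y z"
    using bspec[OF bspec[OF assms(1)[unfolded metric_on_def] assms(2)] assms(3)] by (elim conjE)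
  then show ?thesis using assms(4) by (rule bspec)
qed

theorem theorem3:
  fixes m :: nat
    and F :: "nat \<Rightarrow> 'a set"
    and d :: "nat \<Rightarrow> 'a \<Rightarrow> 'a \<Rightarrow> real"
    and lab :: "nat \<Rightarrow> (nat \<Rightarrow> nat) \<Rightarrow> 'a"
  assumes "m \<ge> 2"
    and "\<And>j. j \<ge> 1 \<Longrightarrow> metric_on (F j) (d j)"
    and "\<And>j. j \<ge> 1 \<Longrightarrow> presentation m (F j) (lab j)"
    and "strong_modular_chaotic_structure m d lab"
  shows "modular_li_yorke_chaotic m d lab"
proof -
  have m1: "1 \<in> {1..m}" using assms(1) by auto
  have part1: "\<forall>j::nat\<ge>1. \<forall>p::nat\<ge>1. \<exists>s\<in>seqs m. periodic_label p s"
  proof (intro allI impI)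
    fix j p :: nat assume "p \<ge> 1"
    then show "\<exists>s\<in>seqs m. periodic_label p s"
      using m1 by (intro bexI[of _ "\<lambda>_. 1"]) (auto simp: periodic_label_def seqs_def)
  qed
  have smcs: "(\<forall>\<epsilon>>0. \<exists>N. \<forall>n\<ge>N. \<forall>j\<ge>1. \<forall>s\<in>seqs m. \<forall>t\<in>seqs m.
         (\<forall>k<n. s k = t k) \<longrightarrow> delta lab d (j, s) (j, t) \<le> \<epsilon>)
   \<and> (\<exists>eps0 :: nat \<Rightarrow> real. \<exists>nn :: nat \<Rightarrow> nat.
        (\<forall>j\<ge>1. eps0 j > 0) \<and> (INF j\<in>{1..}. eps0 j) > 0 \<and>
        (\<forall>j\<ge>1. \<forall>u\<in>seqs m. \<exists>v\<in>seqs m. \<forall>s\<in>seqs m. \<forall>t\<in>seqs m.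
            (\<forall>k<nn j. s k = u k) \<longrightarrow> (\<forall>k<nn j. t k = v k) \<longrightarrow>
            delta lab d (j, s) (j, t) \<ge> eps0 j))"
    using assms(4) unfolding strong_modular_chaotic_structure_def .
  have diam: "\<forall>\<epsilon>>0. \<exists>N. \<forall>n\<ge>N. \<forall>j\<ge>1. \<forall>s\<in>seqs m. \<forall>t\<in>seqs m.
         (\<forall>k<n. s k = t k) \<longrightarrow> delta lab d (j, s) (j, t) \<le> \<epsilon>"
    using smcs by (rule conjunct1)
  obtain eps0 :: "nat \<Rightarrow> real" and nn :: "nat \<Rightarrow> nat" where e0: "\<forall>j\<ge>1. eps0 j > 0"
    and einf: "(INF j\<in>{1..}. eps0 j) > 0"
    and sep: "\<forall>j\<ge>1. \<forall>u\<in>seqs m. \<exists>v\<in>seqs m. \<forall>s\<in>seqs m. \<forall>t\<in>seqs m.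
            (\<forall>k<nn j. s k = u k) \<longrightarrow> (\<forall>k<nn j. t k = v k) \<longrightarrow>
            delta lab d (j, s) (j, t) \<ge> eps0 j"
    using conjunct2[OF smcs] by (elim exE conjE) (rule that)
  define c where "c = (INF j\<in>{1..}. eps0 j)"
  have cpos: "c > 0" using einf c_def by simp
  have ce: "eps0 l \<ge> c" if "l \<ge> 1" for l
    unfolding c_def
    by (rule cINF_lower) (use e0 that in \<open>auto intro!: bdd_belowI2[of _ 0] less_imp_le\<close>)
  have labF: "lab l s \<in> F l" if "l \<ge> 1" "s \<in> seqs m" for l s
    using assms(3)[OF that(1)] that(2) unfolding presentation_def by blast
  have dpos: "delta lab d (l,s) (l,t) \<ge> 0" and dsym: "delta lab d (l,s) (l,t) = delta lab d (l,t) (l,s)"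
    and dzero: "delta lab d (l,s) (l,s) = 0"
    if "l \<ge> 1" "s \<in> seqs m" "t \<in> seqs m" for l s t
    using metric_onD[OF assms(2)[OF that(1)] labF[OF that(1,2)] labF[OF that(1,3)]]
    unfolding delta_def by simp_all
  have dtri: "delta lab d (l,s) (l,u) \<le> delta lab d (l,s) (l,t) + delta lab d (l,t) (l,u)"
    if "l \<ge> 1" "s \<in> seqs m" "t \<in> seqs m" "u \<in> seqs m" for l s t u
    using metric_on_tri[OF assms(2)[OF that(1)] labF[OF that(1,2)] labF[OF that(1,3)] labF[OF that(1,4)]]
    unfolding delta_def by simp
  obtain N0 where N0: "\<forall>n\<ge>N0. \<forall>j\<ge>1. \<forall>s\<in>seqs m. \<forall>t\<in>seqs m.
         (\<forall>k<n. s k = t k) \<longrightarrow> delta lab d (j, s) (j, t) \<le> c/4"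
  proof -
    have "c/4 > 0" using cpos by simp
    from diam[rule_format, OF this] show ?thesis by (elim exE) (rule that)
  qed
  define N where "N = Suc N0"
  have Npos: "N \<ge> 1" by (simp add: N_def)
  have diamN: "delta lab d (l,s) (l,t) \<le> c/4"
    if "l \<ge> 1" "s \<in> seqs m" "t \<in> seqs m" "\<forall>k<N. s k = t k" for l s t
  proof -
    have "N \<ge> N0" by (simp add: N_def)
    from N0[rule_format, OF this that(1) that(2) that(3)] that(4) show ?thesis by blast
  qed
  have sepN: "\<exists>v\<in>seqs m. \<forall>s\<in>seqs m. \<forall>t\<in>seqs m. (\<forall>k<N. s k = u k) \<longrightarrow> (\<forall>k<N. t k = v k)
      \<longrightarrow> delta lab d (l,s) (l,t) \<ge> c/2"
    if l: "l \<ge> 1" and u: "u \<in> seqs m" for l u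
  proof -
    obtain v where v: "v \<in> seqs m" and hv: "\<forall>s\<in>seqs m. \<forall>t\<in>seqs m.
            (\<forall>k<nn l. s k = u k) \<longrightarrow> (\<forall>k<nn l. t k = v k) \<longrightarrow>
            delta lab d (l, s) (l, t) \<ge> eps0 l"
      using sep l u by blast
    have "delta lab d (l,u) (l,v) \<ge> eps0 l" using hv[rule_format, OF u v] by simp
    then have uv: "delta lab d (l,u) (l,v) \<ge> c" using ce[OF l] by linarith
    show ?thesis
    proof (intro bexI[OF _ v] ballI impI)
      fix s t assume s: "s \<in> seqs m" and t: "t \<in> seqs m"
        and su: "\<forall>k<N. s k = u k" and tv: "\<forall>k<N. t k = v k"
      have 1: "delta lab d (l,s) (l,u) \<le> c/4" using diamN[OF l s u su] .
      have 2: "delta lab d (l,t) (l,v) \<le> c/4" using diamN[OF l t v tv] .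
      have "delta lab d (l,u) (l,v) \<le> delta lab d (l,u) (l,s) + delta lab d (l,s) (l,v)"
        using dtri[OF l u s v] .
      moreover have "delta lab d (l,s) (l,v) \<le> delta lab d (l,s) (l,t) + delta lab d (l,t) (l,v)"
        using dtri[OF l s t v] .
      moreover have "delta lab d (l,u) (l,s) = delta lab d (l,s) (l,u)" using dsym[OF l u s] .
      ultimately show "delta lab d (l,s) (l,t) \<ge> c/2" using uv 1 2 by linarith
    qed
  qed

  define W where "W = {w. set w \<subseteq> {1..m} \<and> length w = N}"
  have finW: "finite W" unfolding W_def by (rule finite_lists_length_eq) simp
  obtain WL where WL: "set WL = W" using finite_list[OF finW] by blast
  define L where "L = length WL"
  define ext :: "nat list \<Rightarrow> nat \<Rightarrow> nat" where "ext w = (\<lambda>q. if q < N then w!q else 1)" for w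
  have ext_seq: "ext w \<in> seqs m" if "w \<in> W" for w
    using that m1 unfolding ext_def W_def seqs_def by (auto simp: subset_iff)
  define Pw where "Pw l w w' \<longleftrightarrow> w' \<in> W \<and> (\<forall>s\<in>seqs m. \<forall>t\<in>seqs m. (\<forall>k<N. s k = w!k) \<longrightarrow>
      (\<forall>k<N. t k = w'!k) \<longrightarrow> delta lab d (l,s) (l,t) \<ge> c/2 \<and> delta lab d (l,t) (l,s) \<ge> c/2)"
    for l w w'
  have exP: "\<exists>w'. Pw l w w'" if l: "l \<ge> 1" and w: "w \<in> W" for l w
  proof -
    obtain v where v: "v \<in> seqs m" and hv: "\<forall>s\<in>seqs m. \<forall>t\<in>seqs m. (\<forall>k<N. s k = ext w k)
      \<longrightarrow> (\<forall>k<N. t k = v k) \<longrightarrow> delta lab d (l,s) (l,t) \<ge> c/2"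
      using sepN[OF l ext_seq[OF w]] by blast
    define w' where "w' = map v [0..<N]"
    have "w' \<in> W" using v unfolding w'_def W_def seqs_def by auto
    moreover have "\<forall>s\<in>seqs m. \<forall>t\<in>seqs m. (\<forall>k<N. s k = w!k) \<longrightarrow>
      (\<forall>k<N. t k = w'!k) \<longrightarrow> delta lab d (l,s) (l,t) \<ge> c/2 \<and> delta lab d (l,t) (l,s) \<ge> c/2"
    proof (intro ballI impI)
      fix s t assume s: "s \<in> seqs m" and t: "t \<in> seqs m" and sw: "\<forall>k<N. s k = w!k"
        and tw: "\<forall>k<N. t k = w'!k"
      have "delta lab d (l,s) (l,t) \<ge> c/2"
        using hv s t sw tw unfolding ext_def w'_def by auto
      then show "delta lab d (l,s) (l,t) \<ge> c/2 \<and> delta lab d (l,t) (l,s) \<ge> c/2"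
        using dsym[OF l s t] by simp
    qed
    ultimately show ?thesis unfolding Pw_def by blast
  qed
  define g where "g l w = (SOME w'. Pw l w w')" for l w
  have gP: "Pw l w (g l w)" if "l \<ge> 1" "w \<in> W" for l w
    unfolding g_def by (rule someI_ex) (rule exP[OF that])
  have usePw: "delta lab d (l,s) (l,t) \<ge> c/2 \<and> delta lab d (l,t) (l,s) \<ge> c/2"
    if "Pw l w w'" "s \<in> seqs m" "t \<in> seqs m" "\<forall>i<N. s i = w!i" "\<forall>i<N. t i = w'!i"
    for l w w' s t using that unfolding Pw_def by blast
  define onew where "onew = replicate N (1::nat)"
  have onew: "onew \<in> W" using m1 unfolding onew_def W_def by auto
  define sp :: "nat \<Rightarrow> nat" where "sp n = fact (n+2)" for n
  have sp_mono: "strict_mono sp" using sp_facts(1) unfolding sp_def by simp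
  have sp_gap: "sp n + n + 1 \<le> sp (Suc n)" for n using sp_facts(2) unfolding sp_def by simp
  have sp_ge: "n \<le> sp n" for n using sp_facts(3) unfolding sp_def by simp
  have sp_dvd: "p dvd sp n" if "1 \<le> p" "p \<le> n" for p n using sp_facts(4) that unfolding sp_def by simp
  have sp_inj: "inj sp" using sp_mono strict_mono_imp_inj_on by blast
  have part2: "\<exists>S \<subseteq> seqs m. \<not> countable S \<and>
        (\<forall>s\<in>S. \<forall>p. \<not> periodic_label p s) \<and>
        (\<forall>s\<in>S. \<forall>t\<in>S. delta lab d (j, s) (j, t) \<noteq> 0 \<longrightarrow>
            limsup (\<lambda>k. ereal (delta lab d ((modsim ^^ k) (j, s)) ((modsim ^^ k) (j, t)))) > 0 \<and>
            liminf (\<lambda>k. ereal (delta lab d ((modsim ^^ k) (j, s)) ((modsim ^^ k) (j, t)))) = 0) \<and>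
        (\<forall>s\<in>S. \<forall>t\<in>seqs m. (\<exists>p. periodic_label p t) \<longrightarrow>
            limsup (\<lambda>k. ereal (delta lab d ((modsim ^^ k) (j, s)) ((modsim ^^ k) (j, t)))) > 0)"
    if j: "j \<ge> 1" for j
  proof -
    define cont :: "(nat \<Rightarrow> bool) \<Rightarrow> nat \<Rightarrow> nat list" where
      "cont \<omega> n = (if n mod Suc L = 0 then
          (if \<omega> (fst (prod_decode (n div Suc L))) then g (j + sp n * N) onew else onew)
          else g (j + sp n * N) (WL ! (n mod Suc L - 1)))" for \<omega> n
    have contW: "cont \<omega> n \<in> W" for \<omega> n
    proof -
      have l: "j + sp n * N \<ge> 1" using j by simp
      have "n mod Suc L < Suc L" by simp
      then have "n mod Suc L \<noteq> 0 \<Longrightarrow> n mod Suc L - 1 < length WL" unfolding L_def by linarith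
      then have "n mod Suc L \<noteq> 0 \<Longrightarrow> WL ! (n mod Suc L - 1) \<in> W"
        using WL nth_mem by blast
      then show ?thesis using gP[OF l] onew unfolding cont_def Pw_def by auto
    qed
    define X :: "(nat \<Rightarrow> bool) \<Rightarrow> nat \<Rightarrow> nat" where
      "X \<omega> i = (if i div N \<in> range sp then cont \<omega> (inv sp (i div N)) ! (i mod N) else 1)" for \<omega> i
    have Xseq: "X \<omega> \<in> seqs m" for \<omega>
    proof -
      have "X \<omega> i \<in> {1..m}" for i
      proof (cases "i div N \<in> range sp")
        case True
        define k where "k = inv sp (i div N)"
        have "i mod N < N" using Npos by simp
        then have "cont \<omega> k ! (i mod N) \<in> set (cont \<omega> k)"
          using contW[of \<omega> k] unfolding W_def by auto
        moreover have "set (cont \<omega> k) \<subseteq> {1..m}" using contW[of \<omega> k] unfolding W_def by blast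
        ultimately have "cont \<omega> k ! (i mod N) \<in> {1..m}" by blast
        then show ?thesis using True unfolding X_def k_def by simp
      qed (use m1 in \<open>simp add: X_def\<close>)
      then show ?thesis unfolding seqs_def by auto
    qed
    have Xblock: "X \<omega> (q + sp n * N) = cont \<omega> n ! q" if "q < N" for \<omega> n q
    proof -
      have "(q + sp n * N) div N = sp n" "(q + sp n * N) mod N = q" using that by auto
      then show ?thesis unfolding X_def using inv_f_f[OF sp_inj] by auto
    qed
    have Xgap: "X \<omega> (i + (sp n + 1) * N) = 1" if "i < n" for \<omega> n i
    proof -
      have b: "(i + (sp n + 1) * N) div N = sp n + 1 + i div N"
        using Npos by (subst div_mult_self1) auto
      have "i div N \<le> i" by simp
      then have lt: "sp n < sp n + 1 + i div N" "sp n + 1 + i div N < sp (Suc n)"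
        using sp_gap[of n] that by linarith+
      have "sp n + 1 + i div N \<notin> range sp"
      proof
        assume "sp n + 1 + i div N \<in> range sp"
        then obtain i' where i': "sp n + 1 + i div N = sp i'" by auto
        have "n < i'" using lt(1) i' strict_mono_less[OF sp_mono, of n i'] by simp
        moreover have "i' < Suc n" using lt(2) i' strict_mono_less[OF sp_mono, of i' "Suc n"] by simp
        ultimately show False by simp
      qed
      then show ?thesis unfolding X_def b by simp
    qed

    define Dl where "Dl s t k = delta lab d ((modsim ^^ k) (j, s)) ((modsim ^^ k) (j, t))" for s t k
    have Dl_eq: "Dl s t k = delta lab d (j+k, \<lambda>i. s (i+k)) (j+k, \<lambda>i. t (i+k))" for s t k
      unfolding Dl_def modsim_pow ..
    have sh: "(\<lambda>i. s (i + k)) \<in> seqs m" if "s \<in> seqs m" for s k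
      using that unfolding seqs_def by auto
    have Dl0: "Dl s s k = 0" if "s \<in> seqs m" for s k
      unfolding Dl_eq using dzero[of "j+k", OF _ sh[OF that] sh[OF that]] j by simp
    have Dlpos: "Dl s t k \<ge> 0" if "s \<in> seqs m" "t \<in> seqs m" for s t k
      unfolding Dl_eq using dpos[of "j+k", OF _ sh[OF that(1)] sh[OF that(2)]] j by simp
    have Bsep: "\<exists>k\<ge>K. Dl (X \<omega>) (X \<omega>') k \<ge> c/2" if ne: "\<omega> a \<noteq> \<omega>' a" for \<omega> \<omega>' a K
    proof -
      define q where "q = prod_encode (a, K)"
      define n where "n = Suc L * q"
      define k where "k = sp n * N"
      define l where "l = j + k"
      have l1: "l \<ge> 1" using j l_def by simp
      have nmod: "n mod Suc L = 0" "n div Suc L = q" unfolding n_def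
        by (simp_all only: mod_mult_self1_is_0 div_mult_self1_is_m[OF zero_less_Suc])
      have fq: "fst (prod_decode q) = a" unfolding q_def by simp
      have "K \<le> q" unfolding q_def by (rule le_prod_encode_2)
      also have "q \<le> n" unfolding n_def by simp
      also have "n \<le> sp n" by (rule sp_ge)
      also have "sp n \<le> k" unfolding k_def using Npos by simp
      finally have Kk: "K \<le> k" .
      have pre: "\<forall>i<N. X \<omega>'' (i + k) = cont \<omega>'' n ! i" for \<omega>'' using Xblock unfolding k_def by blast
      have cont1: "cont \<omega>'' n = (if \<omega>'' a then g l onew else onew)" for \<omega>''
        unfolding cont_def l_def k_def using nmod fq by simp
      have P: "Pw l onew (g l onew)" using gP[OF l1 onew] .
      have s1: "(\<lambda>i. X \<omega> (i+k)) \<in> seqs m" "(\<lambda>i. X \<omega>' (i+k)) \<in> seqs m"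
        using sh Xseq by blast+
      have "delta lab d (l, \<lambda>i. X \<omega> (i+k)) (l, \<lambda>i. X \<omega>' (i+k)) \<ge> c/2"
      proof (cases "\<omega> a")
        case True
        then have "\<not> \<omega>' a" using ne by simp
        then have a1: "\<forall>i<N. X \<omega>' (i+k) = onew ! i" using pre[of \<omega>'] cont1[of \<omega>'] by simp
        have a2: "\<forall>i<N. X \<omega> (i+k) = g l onew ! i" using pre[of \<omega>] cont1[of \<omega>] True by simp
        show ?thesis using usePw[OF P s1(2) s1(1)] a1 a2 by simp
      next
        case False
        then have "\<omega>' a" using ne by simp
        then have a1: "\<forall>i<N. X \<omega>' (i+k) = g l onew ! i" using pre[of \<omega>'] cont1[of \<omega>'] by simp
        have a2: "\<forall>i<N. X \<omega> (i+k) = onew ! i" using pre[of \<omega>] cont1[of \<omega>] False by simp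
        show ?thesis using usePw[OF P s1(1) s1(2)] a1 a2 by simp
      qed
      then show ?thesis using Kk unfolding Dl_eq l_def by blast
    qed
    have Cclose: "\<exists>k\<ge>K. Dl (X \<omega>) (X \<omega>') k \<le> \<epsilon>" if eps: "\<epsilon> > 0" for \<omega> \<omega>' \<epsilon> K
    proof -
      obtain M where M: "\<forall>n\<ge>M. \<forall>j\<ge>1. \<forall>s\<in>seqs m. \<forall>t\<in>seqs m.
         (\<forall>k<n. s k = t k) \<longrightarrow> delta lab d (j, s) (j, t) \<le> \<epsilon>"
        using diam[rule_format, OF eps] by (elim exE) (rule that)
      define n where "n = max K M"
      define k where "k = (sp n + 1) * N"
      have "K \<le> n" unfolding n_def by simp
      also have "n \<le> sp n" by (rule sp_ge)
      also have "sp n \<le> k"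
      proof -
        have "(sp n + 1) * 1 \<le> (sp n + 1) * N" using Npos by (rule mult_le_mono2)
        then have "sp n + 1 \<le> (sp n + 1) * N" by (simp only: mult_1_right)
        then show ?thesis unfolding k_def by linarith
      qed
      finally have Kk: "K \<le> k" .
      have agree: "\<forall>i<M. X \<omega> (i+k) = X \<omega>' (i+k)"
      proof (intro allI impI)
        fix i assume "i < M"
        then have "i < n" unfolding n_def by simp
        then show "X \<omega> (i+k) = X \<omega>' (i+k)" using Xgap[of i n \<omega>] Xgap[of i n \<omega>'] unfolding k_def by simp
      qed
      have s1: "(\<lambda>i. X \<omega> (i+k)) \<in> seqs m" "(\<lambda>i. X \<omega>' (i+k)) \<in> seqs m"
        using sh Xseq by blast+
      have jk: "j + k \<ge> 1" using j by simp
      have "delta lab d (j+k, \<lambda>i. X \<omega> (i+k)) (j+k, \<lambda>i. X \<omega>' (i+k)) \<le> \<epsilon>"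
        using M[rule_format, OF order_refl jk s1(1) s1(2)] agree by simp
      then show ?thesis using Kk unfolding Dl_eq by blast
    qed
    have Dsep: "\<exists>k\<ge>K. Dl (X \<omega>) t k \<ge> c/2" if t: "t \<in> seqs m" and pt: "periodic_label p t"
      for \<omega> t p K
    proof -
      have p1: "p \<ge> 1" using pt periodic_label_def by blast
      define wt where "wt = map t [0..<N]"
      have "wt \<in> W" using t unfolding wt_def W_def seqs_def by auto
      then have "wt \<in> set WL" using WL by simp
      then obtain r where r: "r < L" "WL ! r = wt" unfolding L_def in_set_conv_nth by blast
      define n where "n = Suc L * (K + p) + Suc r"
      have nmod: "n mod Suc L = Suc r" unfolding n_def
        by (simp only: mod_mult_self4, rule mod_less) (use r(1) in simp)
      have "K + p \<le> Suc L * (K + p)" by simp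
      then have pn: "p \<le> n" "K \<le> n" unfolding n_def by linarith+
      define k where "k = sp n * N"
      define l where "l = j + k"
      have l1: "l \<ge> 1" using j l_def by simp
      have "K \<le> sp n" using pn(2) sp_ge[of n] by linarith
      also have "sp n \<le> k" unfolding k_def using Npos by simp
      finally have Kk: "K \<le> k" .
      have "p dvd k" using sp_dvd[OF p1 pn(1)] unfolding k_def by simp
      then obtain e where e: "k = p * e" by (auto elim: dvdE)
      have tk: "\<forall>i<N. t (i + k) = WL ! r ! i"
        using periodic_mult[OF pt] r(2) unfolding wt_def e by simp
      have xk: "\<forall>i<N. X \<omega> (i+k) = g l (WL ! r) ! i"
        using Xblock nmod unfolding k_def l_def cont_def by simp
      have "WL ! r \<in> W" using r(1) WL nth_mem unfolding L_def by blast
      then have P: "Pw l (WL ! r) (g l (WL ! r))" using gP[OF l1] by blast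
      have s1: "(\<lambda>i. X \<omega> (i+k)) \<in> seqs m" "(\<lambda>i. t (i+k)) \<in> seqs m"
        using sh Xseq t by blast+
      have "delta lab d (l, \<lambda>i. X \<omega> (i+k)) (l, \<lambda>i. t (i+k)) \<ge> c/2"
        using usePw[OF P s1(2) s1(1)] tk xk by simp
      then show ?thesis using Kk unfolding Dl_eq l_def by blast
    qed
    define S where "S = range X"
    have Xinj: "inj X"
    proof (rule injI)
      fix \<omega> \<omega>' assume eq: "X \<omega> = X \<omega>'"
      show "\<omega> = \<omega>'"
      proof (rule ccontr)
        assume "\<omega> \<noteq> \<omega>'" then obtain a where "\<omega> a \<noteq> \<omega>' a" by auto
        then obtain k where "Dl (X \<omega>) (X \<omega>') k \<ge> c/2" using Bsep[where \<omega>=\<omega> and \<omega>'=\<omega>' and a=a and K=0] by blast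
        moreover have "Dl (X \<omega>) (X \<omega>') k = 0" using eq Dl0 Xseq by simp
        ultimately show False using cpos by simp
      qed
    qed
    have unc: "\<not> countable S"
      unfolding S_def using uncountable_nat_bool countable_image_inj_on[OF _ Xinj] by blast
    have sub: "S \<subseteq> seqs m" unfolding S_def using Xseq by blast
    have np: "\<forall>s\<in>S. \<forall>p. \<not> periodic_label p s"
    proof (intro ballI allI notI)
      fix s p assume "s \<in> S" and pp: "periodic_label p s"
      then obtain \<omega> where s: "s = X \<omega>" unfolding S_def by blast
      have ss: "s \<in> seqs m" using s Xseq by simp
      obtain k where "Dl (X \<omega>) s k \<ge> c/2" using Dsep[OF ss pp, where \<omega>=\<omega> and K=0] by blast
      moreover have "Dl (X \<omega>) s k = 0" using Dl0 Xseq s by simp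
      ultimately show False using cpos by simp
    qed
    have c2: "0 < ereal (c/2)" using cpos by simp
    have ly: "limsup (\<lambda>k. ereal (Dl s t k)) > 0 \<and> liminf (\<lambda>k. ereal (Dl s t k)) = 0"
      if hs: "s \<in> S" and ht: "t \<in> S" and hd: "delta lab d (j, s) (j, t) \<noteq> 0" for s t
    proof -
      obtain \<omega> \<omega>' where s: "s = X \<omega>" and t: "t = X \<omega>'" using hs ht unfolding S_def by blast
      have "\<omega> \<noteq> \<omega>'" using hd dzero[OF j Xseq Xseq] s t by auto
      then obtain a where a: "\<omega> a \<noteq> \<omega>' a" by auto
      have "ereal (c/2) \<le> limsup (\<lambda>k. ereal (Dl s t k))"
      proof (rule limsup_ge_freq)
        fix K show "\<exists>k\<ge>K. ereal (c/2) \<le> ereal (Dl s t k)" using Bsep[where \<omega>=\<omega> and \<omega>'=\<omega>' and a=a and K=K, OF a] s t by auto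
      qed
      then have 1: "limsup (\<lambda>k. ereal (Dl s t k)) > 0" by (rule order_less_le_trans[OF c2])
      have "liminf (\<lambda>k. ereal (Dl s t k)) \<le> 0"
      proof (rule ereal_le_epsilon2)
        fix e :: real assume "0 < e"
        then have "liminf (\<lambda>k. ereal (Dl s t k)) \<le> ereal e"
        proof (intro liminf_le_freq)
          fix K show "\<exists>k\<ge>K. ereal (Dl s t k) \<le> ereal e" using Cclose[OF \<open>0 < e\<close>, where \<omega>=\<omega> and \<omega>'=\<omega>' and K=K] s t by auto
        qed
        then show "liminf (\<lambda>k. ereal (Dl s t k)) \<le> 0 + ereal e" by simp
      qed
      moreover have "0 \<le> liminf (\<lambda>k. ereal (Dl s t k))"
        by (rule Liminf_bounded, rule always_eventually) (use Dlpos Xseq s t in auto)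
      ultimately show ?thesis using 1 by simp
    qed
    have lyp: "limsup (\<lambda>k. ereal (Dl s t k)) > 0"
      if hs: "s \<in> S" and tseq: "t \<in> seqs m" and hp: "\<exists>p. periodic_label p t" for s t
    proof -
      obtain \<omega> where s: "s = X \<omega>" using hs unfolding S_def by blast
      obtain p where pt: "periodic_label p t" using hp by blast
      have "ereal (c/2) \<le> limsup (\<lambda>k. ereal (Dl s t k))"
      proof (rule limsup_ge_freq)
        fix K show "\<exists>k\<ge>K. ereal (c/2) \<le> ereal (Dl s t k)" using Dsep[OF tseq pt, where \<omega>=\<omega> and K=K] s by auto
      qed
      then show ?thesis by (rule order_less_le_trans[OF c2])
    qed
    have G1: "\<forall>s\<in>S. \<forall>t\<in>S. delta lab d (j, s) (j, t) \<noteq> 0 \<longrightarrow>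
            limsup (\<lambda>k. ereal (delta lab d ((modsim ^^ k) (j, s)) ((modsim ^^ k) (j, t)))) > 0 \<and>
            liminf (\<lambda>k. ereal (delta lab d ((modsim ^^ k) (j, s)) ((modsim ^^ k) (j, t)))) = 0"
      by (intro ballI impI, rule ly[unfolded Dl_def]) assumption+
    have G2: "\<forall>s\<in>S. \<forall>t\<in>seqs m. (\<exists>p. periodic_label p t) \<longrightarrow>
            limsup (\<lambda>k. ereal (delta lab d ((modsim ^^ k) (j, s)) ((modsim ^^ k) (j, t)))) > 0"
      by (intro ballI impI, rule lyp[unfolded Dl_def]) assumption+
    show ?thesis
      by (rule exI[of _ S]) (intro conjI sub unc np G1 G2)
  qed
  show ?thesis unfolding modular_li_yorke_chaotic_def
  proof (intro conjI part1 allI impI)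
    fix j :: nat assume "j \<ge> 1"
    then show "\<exists>S\<subseteq>seqs m. \<not> countable S \<and>
        (\<forall>s\<in>S. \<forall>p. \<not> periodic_label p s) \<and>
        (\<forall>s\<in>S. \<forall>t\<in>S. delta lab d (j, s) (j, t) \<noteq> 0 \<longrightarrow>
            limsup (\<lambda>k. ereal (delta lab d ((modsim ^^ k) (j, s)) ((modsim ^^ k) (j, t)))) > 0 \<and>
            liminf (\<lambda>k. ereal (delta lab d ((modsim ^^ k) (j, s)) ((modsim ^^ k) (j, t)))) = 0) \<and>
        (\<forall>s\<in>S. \<forall>t\<in>seqs m. (\<exists>p. periodic_label p t) \<longrightarrow>
            limsup (\<lambda>k. ereal (delta lab d ((modsim ^^ k) (j, s)) ((modsim ^^ k) (j, t)))) > 0)"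
      by (rule part2)
  qed
qed

end
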